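(* Let $\alpha_1,\alpha_2\in\mathbb{R}\setminus\{0\}$, $r=\alpha_2/\alpha_1$. For every $b\in\mathbb{R}$, there is no constant $C$ such that $$\|(\partial_xw_1)w_2\|_{X^{\alpha_1}_{s,b-1}}\le C\|w_1\|_{X^{\alpha_1}_{s,b}}\|w_2\|_{X^{\alpha_2}_{s,b}}$$ holds for all $w_1\in X^{\alpha_1}_{s,b}$, $w_2\in X^{\alpha_2}_{s,b}$ with $\hat w_2(0,\cdot)=0$, in each of the situations: (a) $r<\frac14$ and $s<-\frac14$; (b) $r=1$ and $s<\frac12$; (c) $r\in[\frac14,\infty)\setminus\{1\}$ and $s<s_r$. Moreover, (d) for any $r\ne0$ and any $s\in\mathbb{R}$ there is no such $C$ if the restriction $\hat w_2(0,\cdot)=0$ is dropped.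
   Context: On $\mathbb{T}=\mathbb{R}/(2\pi\mathbb{Z})$: $\hat w(k,\tau)=\int_\mathbb{R}\int_0^{2\pi}e^{-i(\tau t+kx)}w(x,t)\,dx\,dt$, $k\in\mathbb{Z}$; $\langle\cdot\rangle=1+|\cdot|$; $X^{\alpha}_{s,b}$ is the completion of Schwartz functions under $\|w\|=\|\langle k\rangle^s\langle\tau-\alpha k^3\rangle^b\hat w(k,\tau)\|_{L^2(\mathbb{Z}\times\mathbb{R})}$. Irrationality exponent $\mu(\rho)=\sup\{\mu:0<|\rho-m/n|<|n|^{-\mu}$ for infinitely many $(m,n)\in\mathbb{Z}\times(\mathbb{Z}\setminus\{0\})\}$; for $r\ge\frac14$, $\sigma_r=\mu(\sqrt{12r-3})$, $s_r=1$ if $\sigma_r=1$ or $\sigma_r\ge3$, $s_r=(\sigma_r-1)/2$ if $2\le\sigma_r<3$. *)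

theory Defs
  imports "HOL-Analysis.Analysis"
begin

definition jbr :: "real \<Rightarrow> real" where
  "jbr x = 1 + \<bar>x\<bar>"

text \<open>Space-time functions on T x R are represented by their space-time Fourier
  transforms u k tau = hat w (k, tau), with k :: int and tau :: real.\<close>
definition Xweight :: "real \<Rightarrow> real \<Rightarrow> real \<Rightarrow> int \<Rightarrow> real \<Rightarrow> real" where
  "Xweight \<alpha> s b k \<tau> = (jbr (real_of_int k)) powr s * (jbr (\<tau> - \<alpha> * (real_of_int k)^3)) powr b"

definition Xnorm2 :: "real \<Rightarrow> real \<Rightarrow> real \<Rightarrow> (int \<Rightarrow> real \<Rightarrow> complex) \<Rightarrow> ennreal" where
  "Xnorm2 \<alpha> s b u =
     (\<integral>\<^sup>+ k. (\<integral>\<^sup>+ t. ennreal ((Xweight \<alpha> s b k t * cmod (u k t))^2) \<partial>lborel) \<partial>count_space UNIV)"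

definition inX :: "real \<Rightarrow> real \<Rightarrow> real \<Rightarrow> (int \<Rightarrow> real \<Rightarrow> complex) \<Rightarrow> bool" where
  "inX \<alpha> s b u \<longleftrightarrow> (\<forall>k. u k \<in> borel_measurable lborel) \<and> Xnorm2 \<alpha> s b u < \<infinity>"

text \<open>Fourier transform of the product (\<partial>_x w1) w2, with the normalisation
  hat w = int int e^{-i(tau t + k x)} w dx dt, so that
  hat(f g) = (2 pi)^{-2} (hat f * hat g) and hat(\<partial>_x w1)(k,tau) = i k hat w1(k,tau).\<close>
definition dxprod_ft :: "(int \<Rightarrow> real \<Rightarrow> complex) \<Rightarrow> (int \<Rightarrow> real \<Rightarrow> complex) \<Rightarrow> int \<Rightarrow> real \<Rightarrow> complex" where
  "dxprod_ft u1 u2 k \<tau> =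
     complex_of_real (1 / (4 * pi\<^sup>2)) *
     (\<Sum>\<^sub>\<infinity>k1\<in>(UNIV::int set).
        LINT \<tau>1|lborel. \<i> * of_int k1 * u1 k1 \<tau>1 * u2 (k - k1) (\<tau> - \<tau>1))"

definition bilinear_est :: "real \<Rightarrow> real \<Rightarrow> real \<Rightarrow> real \<Rightarrow> bool \<Rightarrow> bool" where
  "bilinear_est \<alpha>1 \<alpha>2 s b meanzero \<longleftrightarrow>
     (\<exists>C::real. \<forall>u1 u2. inX \<alpha>1 s b u1 \<longrightarrow> inX \<alpha>2 s b u2 \<longrightarrow>
        (meanzero \<longrightarrow> (\<forall>\<tau>. u2 0 \<tau> = 0)) \<longrightarrow>
        Xnorm2 \<alpha>1 s (b - 1) (dxprod_ft u1 u2)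
          \<le> ennreal (C\<^sup>2) * Xnorm2 \<alpha>1 s b u1 * Xnorm2 \<alpha>2 s b u2)"

definition irr_exp :: "real \<Rightarrow> ereal" where
  "irr_exp \<rho> = Sup (ereal ` {\<mu>::real. infinite {(m, n::int). n \<noteq> 0 \<and>
        0 < \<bar>\<rho> - real_of_int m / real_of_int n\<bar> \<and>
        \<bar>\<rho> - real_of_int m / real_of_int n\<bar> < \<bar>real_of_int n\<bar> powr (-\<mu>)}})"

definition sigma_r :: "real \<Rightarrow> ereal" where
  "sigma_r r = irr_exp (sqrt (12 * r - 3))"

definition s_r :: "real \<Rightarrow> real" where
  "s_r r = (if sigma_r r = 1 \<or> sigma_r r \<ge> 3 then 1
            else if 2 \<le> sigma_r r \<and> sigma_r r < 3 then (real_of_ereal (sigma_r r) - 1) / 2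
            else undefined)"

end

theory Submission
  imports Defs "HOL-Analysis.Kronecker_Approximation_Theorem"
begin
lemma dx_single:
  fixes K1 K2 :: int and a c \<tau> :: real
  assumes "a + c + 1/2 \<le> \<tau>" "\<tau> \<le> a + c + 3/2"
  shows "cmod (dxprod_ft (\<lambda>k t. if k = K1 then complex_of_real (indicator {a..a+1} t) else 0)
     (\<lambda>k t. if k = K2 then complex_of_real (indicator {c..c+1} t) else 0) (K1+K2) \<tau>)
     \<ge> \<bar>real_of_int K1\<bar> / (8*pi^2)"
proof -
  define u1 where "u1 = (\<lambda>k t. if k = K1 then complex_of_real (indicator {a..a+1} t) else 0)"
  define u2 where "u2 = (\<lambda>(k::int) t. if k = K2 then complex_of_real (indicator {c..c+1} t) else 0)"
  define S where "S = {max a (\<tau>-c-1)..min (a+1) (\<tau>-c)}"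
  have ind: "indicator {a..a+1} t * indicator {c..c+1} (\<tau>-t) = (indicator S t :: real)" for t
    by (auto simp: S_def split: split_indicator)
  have mS: "measure lborel S \<ge> 1/2"
    using assms by (simp add: S_def min_def max_def)
  have f: "(\<lambda>k1. LINT \<tau>1|lborel. \<i> * of_int k1 * u1 k1 \<tau>1 * u2 (K1+K2-k1) (\<tau>-\<tau>1))
     = (\<lambda>k1. if k1 = K1 then \<i> * of_int K1 * complex_of_real (measure lborel S) else 0)"
  proof
    fix k1
    show "(LINT \<tau>1|lborel. \<i> * of_int k1 * u1 k1 \<tau>1 * u2 (K1+K2-k1) (\<tau>-\<tau>1))
     = (if k1 = K1 then \<i> * of_int K1 * complex_of_real (measure lborel S) else 0)"
    proof (cases "k1 = K1")
      case True
      have "(LINT \<tau>1|lborel. \<i> * of_int k1 * u1 k1 \<tau>1 * u2 (K1+K2-k1) (\<tau>-\<tau>1))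
          = (LINT \<tau>1|lborel. \<i> * of_int K1 * complex_of_real (indicator S \<tau>1))"
        using True by (intro Bochner_Integration.integral_cong refl) (simp add: u1_def u2_def ind[symmetric])
      also have "\<dots> = \<i> * of_int K1 * complex_of_real (measure lborel S)"
        by (simp add: S_def)
      finally show ?thesis using True by simp
    qed (simp add: u1_def)
  qed
  have "dxprod_ft u1 u2 (K1+K2) \<tau> = complex_of_real (1 / (4 * pi\<^sup>2)) * (\<i> * of_int K1 * complex_of_real (measure lborel S))"
    unfolding dxprod_ft_def f by (subst infsum_cong_neutral[where T="{K1}" and g="\<lambda>_. \<i> * of_int K1 * complex_of_real (measure lborel S)"]) auto
  then have "cmod (dxprod_ft u1 u2 (K1+K2) \<tau>) = \<bar>real_of_int K1\<bar> * measure lborel S / (4*pi^2)"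
    by (simp only: norm_mult norm_of_real norm_ii norm_of_int) (use mS in \<open>simp add: abs_of_nonneg\<close>)
  also have "\<dots> \<ge> \<bar>real_of_int K1\<bar> / (8*pi^2)"
    using mS by (simp add: field_simps) (metis abs_ge_zero mult_le_cancel_left1 not_le order_le_less_trans)
  finally show ?thesis unfolding u1_def u2_def by simp
qed
lemma Xweight_nonneg: "Xweight \<alpha> s b k t \<ge> 0"
  by (simp add: Xweight_def)

lemma Xnorm2_single_le:
  fixes K :: int and a \<alpha> s b W :: real
  assumes W: "\<And>\<tau>. \<tau> \<in> {a..a+1} \<Longrightarrow> Xweight \<alpha> s b K \<tau> \<le> W"
  shows "Xnorm2 \<alpha> s b (\<lambda>k t. if k = K then complex_of_real (indicator {a..a+1} t) else 0) \<le> ennreal (W^2)"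
proof -
  define g where "g k = (\<integral>\<^sup>+ t. ennreal ((Xweight \<alpha> s b k t * cmod ((\<lambda>k t. if k = K then complex_of_real (indicator {a..a+1} t) else 0) k t))^2) \<partial>lborel)" for k
  have "Xnorm2 \<alpha> s b (\<lambda>k t. if k = K then complex_of_real (indicator {a..a+1} t) else 0) = (\<integral>\<^sup>+ k. g k \<partial>count_space UNIV)"
    unfolding Xnorm2_def g_def by simp
  also have "\<dots> = (\<integral>\<^sup>+ k. g k * indicator {K} k \<partial>count_space UNIV)"
    by (intro nn_integral_cong) (auto simp: g_def split: split_indicator)
  also have "\<dots> = g K" by simp
  also have "g K \<le> (\<integral>\<^sup>+ t. ennreal (W^2) * indicator {a..a+1} t \<partial>lborel)"
    unfolding g_def
  proof (intro nn_integral_mono)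
    fix t
    show "ennreal ((Xweight \<alpha> s b K t * cmod (if K = K then complex_of_real (indicator {a..a+1} t) else 0))^2)
          \<le> ennreal (W^2) * indicator {a..a+1} t"
    proof (cases "t \<in> {a..a+1}")
      case True
      then have "Xweight \<alpha> s b K t \<le> W" by (rule W)
      then have "(Xweight \<alpha> s b K t)^2 \<le> W^2"
        using Xweight_nonneg by (intro power_mono) auto
      then show ?thesis using True by simp
    qed simp
  qed
  also have "\<dots> = ennreal (W^2)" by (simp add: nn_integral_cmult_indicator)
  finally show ?thesis .
qed

lemma inX_single:
  fixes K :: int and a \<alpha> s b :: real
  shows "inX \<alpha> s b (\<lambda>k t. if k = K then complex_of_real (indicator {a..a+1} t) else 0)"
proof -
  obtain W where W: "\<And>\<tau>. \<tau> \<in> {a..a+1} \<Longrightarrow> Xweight \<alpha> s b K \<tau> \<le> W"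
  proof -
    have "compact ((\<lambda>\<tau>. Xweight \<alpha> s b K \<tau>) ` {a..a+1})"
      unfolding Xweight_def jbr_def
      by (intro compact_continuous_image continuous_on_mult continuous_on_const continuous_on_powr continuous_intros) auto
    then have "bounded ((\<lambda>\<tau>. Xweight \<alpha> s b K \<tau>) ` {a..a+1})" by (rule compact_imp_bounded)
    then obtain B where "\<And>\<tau>. \<tau> \<in> {a..a+1} \<Longrightarrow> norm (Xweight \<alpha> s b K \<tau>) \<le> B"
      unfolding bounded_iff by blast
    then have "\<And>\<tau>. \<tau> \<in> {a..a+1} \<Longrightarrow> Xweight \<alpha> s b K \<tau> \<le> B"
      by (metis abs_ge_self order_trans real_norm_def)
    then show ?thesis by (rule that)
  qed
  have le: "Xnorm2 \<alpha> s b (\<lambda>k t. if k = K then complex_of_real (indicator {a..a+1} t) else 0) \<le> ennreal (W^2)"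
    by (rule Xnorm2_single_le) (rule W)
  have fin: "Xnorm2 \<alpha> s b (\<lambda>k t. if k = K then complex_of_real (indicator {a..a+1} t) else 0) < \<infinity>"
    by (rule order_le_less_trans[OF le]) simp
  have "(\<lambda>t. if k = K then complex_of_real (indicator {a..a+1} t) else 0) \<in> borel_measurable lborel" for k
    by (cases "k = K") simp_all
  then show ?thesis unfolding inX_def using fin by blast
qed

lemma Xnorm2_point_ge:
  fixes K :: int and I :: "real set" and L :: real
  assumes I: "I \<in> sets lborel" "emeasure lborel I = 1" and L: "L \<ge> 0"
    and lb: "\<And>t. t \<in> I \<Longrightarrow> L \<le> (Xweight \<alpha> s b K t * cmod (v K t))^2"
  shows "ennreal L \<le> Xnorm2 \<alpha> s b v"
proof -
  define g where "g k = (\<integral>\<^sup>+ t. ennreal ((Xweight \<alpha> s b k t * cmod (v k t))^2) \<partial>lborel)" for k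
  have "ennreal L = (\<integral>\<^sup>+ t. ennreal L * indicator I t \<partial>lborel)"
    using I by (simp add: nn_integral_cmult_indicator)
  also have "\<dots> \<le> g K" unfolding g_def
    by (intro nn_integral_mono) (auto simp: lb split: split_indicator)
  also have "\<dots> = (\<integral>\<^sup>+ k. g k * indicator {K} k \<partial>count_space UNIV)" by simp
  also have "\<dots> \<le> (\<integral>\<^sup>+ k. g k \<partial>count_space UNIV)"
    by (intro nn_integral_mono) (auto split: split_indicator)
  also have "\<dots> = Xnorm2 \<alpha> s b v" unfolding Xnorm2_def g_def by simp
  finally show ?thesis .
qed
lemma jbr_pos: "jbr x > 0" and jbr_ge1: "jbr x \<ge> 1" by (auto simp: jbr_def)

lemma jbr_le: assumes "\<bar>x - y\<bar> \<le> d" shows "jbr x \<le> (1 + d) * jbr y"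
proof -
  have "d \<ge> 0" using assms by linarith
  have "\<bar>x\<bar> \<le> \<bar>y\<bar> + d" using assms by linarith
  moreover have "d * \<bar>y\<bar> \<ge> 0" using \<open>d \<ge> 0\<close> by simp
  ultimately show ?thesis unfolding jbr_def by (simp add: algebra_simps)
qed

lemma jbr_powr_le:
  assumes "\<bar>x - y\<bar> \<le> d"
  shows "jbr x powr e \<le> (1 + d) powr \<bar>e\<bar> * jbr y powr e"
proof -
  have d: "d \<ge> 0" using assms by linarith
  show ?thesis
  proof (cases "e \<ge> 0")
    case True
    have "jbr x powr e \<le> ((1 + d) * jbr y) powr e"
      using jbr_le[OF assms] jbr_pos by (intro powr_mono2) (auto simp: less_imp_le True)
    also have "\<dots> = (1 + d) powr \<bar>e\<bar> * jbr y powr e"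
      using True d jbr_pos by (simp add: powr_mult less_imp_le)
    finally show ?thesis .
  next
    case False
    have "\<bar>y - x\<bar> \<le> d" using assms by linarith
    from jbr_le[OF this] have yx: "jbr y / (1 + d) \<le> jbr x" using d by (simp add: field_simps)
    have "jbr x powr e \<le> (jbr y / (1 + d)) powr e"
      using yx jbr_pos d False by (intro powr_mono2') auto
    also have "\<dots> = (1 + d) powr \<bar>e\<bar> * jbr y powr e"
      using False d jbr_pos by (simp add: powr_divide less_imp_le powr_minus_divide powr_minus divide_simps)
    finally show ?thesis .
  qed
qed

lemma jbr_powr_ge:
  assumes "\<bar>x - y\<bar> \<le> d"
  shows "(1 + d) powr (-\<bar>e\<bar>) * jbr y powr e \<le> jbr x powr e"
proof -
  have d: "d \<ge> 0" using assms by linarith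
  have "\<bar>y - x\<bar> \<le> d" using assms by linarith
  from jbr_powr_le[OF this, of e] have "jbr y powr e \<le> (1 + d) powr \<bar>e\<bar> * jbr x powr e" .
  then show ?thesis using d by (simp add: powr_minus field_simps)
qed

lemma est_step:
  fixes K1 K2 :: int and a c W1 W2 V C :: real
  assumes est: "\<forall>u1 u2. inX \<alpha>1 s b u1 \<longrightarrow> inX \<alpha>2 s b u2 \<longrightarrow>
        (mz \<longrightarrow> (\<forall>\<tau>. u2 0 \<tau> = 0)) \<longrightarrow>
        Xnorm2 \<alpha>1 s (b - 1) (dxprod_ft u1 u2)
          \<le> ennreal (C\<^sup>2) * Xnorm2 \<alpha>1 s b u1 * Xnorm2 \<alpha>2 s b u2"
    and mz: "mz \<longrightarrow> K2 \<noteq> 0"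
    and W1: "\<And>\<tau>. \<tau> \<in> {a..a+1} \<Longrightarrow> Xweight \<alpha>1 s b K1 \<tau> \<le> W1"
    and W2: "\<And>\<tau>. \<tau> \<in> {c..c+1} \<Longrightarrow> Xweight \<alpha>2 s b K2 \<tau> \<le> W2"
    and V0: "0 \<le> V" and V: "\<And>\<tau>. \<tau> \<in> {a+c+1/2..a+c+3/2} \<Longrightarrow> V \<le> Xweight \<alpha>1 s (b-1) (K1+K2) \<tau>"
  shows "V * \<bar>real_of_int K1\<bar> / (8*pi^2) \<le> \<bar>C\<bar> * W1 * W2"
proof -
  define u1 where "u1 = (\<lambda>k t. if k = K1 then complex_of_real (indicator {a..a+1} t) else 0)"
  define u2 where "u2 = (\<lambda>k t. if k = K2 then complex_of_real (indicator {c..c+1} t) else 0)"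
  have W10: "W1 \<ge> 0" using W1[of a] Xweight_nonneg[of \<alpha>1 s b K1 a] by simp
  have W20: "W2 \<ge> 0" using W2[of c] Xweight_nonneg[of \<alpha>2 s b K2 c] by simp
  define L where "L = V * \<bar>real_of_int K1\<bar> / (8*pi^2)"
  have L0: "L \<ge> 0" using V0 by (simp add: L_def)
  have "ennreal (L^2) \<le> Xnorm2 \<alpha>1 s (b - 1) (dxprod_ft u1 u2)"
  proof (rule Xnorm2_point_ge[where I="{a+c+1/2..a+c+3/2}"])
    fix t assume t: "t \<in> {a+c+1/2..a+c+3/2}"
    have d: "cmod (dxprod_ft u1 u2 (K1+K2) t) \<ge> \<bar>real_of_int K1\<bar> / (8*pi^2)"
      unfolding u1_def u2_def by (rule dx_single) (use t in auto)
    have "L \<le> Xweight \<alpha>1 s (b-1) (K1+K2) t * cmod (dxprod_ft u1 u2 (K1+K2) t)"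
      unfolding L_def using mult_mono[OF V[OF t] d Xweight_nonneg] V0 by (simp add: times_divide_eq_right)
    then show "L^2 \<le> (Xweight \<alpha>1 s (b-1) (K1+K2) t * cmod (dxprod_ft u1 u2 (K1+K2) t))^2"
      using L0 by (intro power_mono) auto
  qed (auto simp: L0)
  also have "\<dots> \<le> ennreal (C\<^sup>2) * Xnorm2 \<alpha>1 s b u1 * Xnorm2 \<alpha>2 s b u2"
    using mz unfolding u1_def u2_def by (intro est[rule_format] inX_single) auto
  also have "\<dots> \<le> ennreal (C\<^sup>2) * ennreal (W1^2) * ennreal (W2^2)"
    unfolding u1_def u2_def
    by (intro mult_mono Xnorm2_single_le W1 W2) auto
  also have "\<dots> = ennreal ((\<bar>C\<bar> * W1 * W2)^2)"
    by (simp add: ennreal_mult' power_mult_distrib)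
  finally have "L^2 \<le> (\<bar>C\<bar> * W1 * W2)^2"
    by (subst (asm) ennreal_le_iff) auto
  then have "L \<le> \<bar>C\<bar> * W1 * W2"
    by (rule power2_le_imp_le) (use W10 W20 in simp)
  then show ?thesis by (simp add: L_def)
qed
definition Hres :: "real \<Rightarrow> real \<Rightarrow> int \<Rightarrow> int \<Rightarrow> real" where
  "Hres \<alpha>1 \<alpha>2 K1 K2 = \<alpha>1 * (real_of_int K1)^3 + \<alpha>2 * (real_of_int K2)^3 - \<alpha>1 * (real_of_int (K1+K2))^3"

definition Pfac :: "real \<Rightarrow> int \<Rightarrow> int \<Rightarrow> real" where
  "Pfac s K1 K2 = \<bar>real_of_int K1\<bar> * jbr (real_of_int (K1+K2)) powr s /
      (jbr (real_of_int K1) powr s * jbr (real_of_int K2) powr s)"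

lemma jbr0: "jbr 0 = 1" by (simp add: jbr_def)
lemma jbr_uminus: "jbr (-x) = jbr x" by (simp add: jbr_def)

lemma fail_pair:
  fixes C :: real
  assumes est: "\<forall>u1 u2. inX \<alpha>1 s b u1 \<longrightarrow> inX \<alpha>2 s b u2 \<longrightarrow>
        (mz \<longrightarrow> (\<forall>\<tau>. u2 0 \<tau> = 0)) \<longrightarrow>
        Xnorm2 \<alpha>1 s (b - 1) (dxprod_ft u1 u2)
          \<le> ennreal (C\<^sup>2) * Xnorm2 \<alpha>1 s b u1 * Xnorm2 \<alpha>2 s b u2"
    and mz: "mz \<longrightarrow> K2 \<noteq> 0"
  shows "Pfac s K1 K2 * jbr (Hres \<alpha>1 \<alpha>2 K1 K2) powr (-1/2)
     \<le> 8*pi^2*\<bar>C\<bar> * 2 powr \<bar>b\<bar> * 2 powr \<bar>b\<bar> * 3 powr \<bar>b-1\<bar> * 3 powr \<bar>b\<bar>"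
proof -
  define H where "H = Hres \<alpha>1 \<alpha>2 K1 K2"
  define h where "h = jbr H"
  define x1 where "x1 = jbr (real_of_int K1) powr s"
  define x2 where "x2 = jbr (real_of_int K2) powr s"
  define x where "x = jbr (real_of_int (K1+K2)) powr s"
  define k where "k = \<bar>real_of_int K1\<bar>"
  define Q where "Q = 8*pi^2*\<bar>C\<bar> * 2 powr \<bar>b\<bar> * 2 powr \<bar>b\<bar> * 3 powr \<bar>b-1\<bar> * 3 powr \<bar>b\<bar>"
  have h1: "h \<ge> 1" unfolding h_def by (rule jbr_ge1)
  have pos: "x1 > 0" "x2 > 0" "x > 0" "k \<ge> 0" unfolding x1_def x2_def x_def k_def
    using jbr_pos[of "real_of_int K1"] jbr_pos[of "real_of_int K2"] jbr_pos[of "real_of_int (K1+K2)"] by auto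
  have P: "Pfac s K1 K2 = k * x / (x1 * x2)" unfolding Pfac_def k_def x_def x1_def x2_def by simp
  have P0: "Pfac s K1 K2 \<ge> 0" using pos unfolding P by simp
  define a0 where "a0 = \<alpha>1 * (real_of_int K1)^3"
  define c0 where "c0 = \<alpha>2 * (real_of_int K2)^3"
  have Hac: "H = a0 + c0 - \<alpha>1 * (real_of_int (K1+K2))^3"
    unfolding H_def Hres_def a0_def c0_def by simp
  have A: "x * 3 powr (-\<bar>b-1\<bar>) * h powr (b-1) * k / (8*pi^2) \<le> \<bar>C\<bar> * (x1 * 2 powr \<bar>b\<bar>) * (x2 * 2 powr \<bar>b\<bar>)"
  unfolding k_def proof (rule est_step[OF est mz, where a=a0 and c=c0])
    fix \<tau> assume t: "\<tau> \<in> {a0..a0+1}"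
    have "jbr (\<tau> - \<alpha>1 * (real_of_int K1)^3) powr b \<le> (1+1) powr \<bar>b\<bar> * jbr 0 powr b"
      by (rule jbr_powr_le) (use t in \<open>auto simp: a0_def\<close>)
    then show "Xweight \<alpha>1 s b K1 \<tau> \<le> x1 * 2 powr \<bar>b\<bar>"
      unfolding Xweight_def x1_def using pos(1) unfolding x1_def by (simp add: jbr0)
  next
    fix \<tau> assume t: "\<tau> \<in> {c0..c0+1}"
    have "jbr (\<tau> - \<alpha>2 * (real_of_int K2)^3) powr b \<le> (1+1) powr \<bar>b\<bar> * jbr 0 powr b"
      by (rule jbr_powr_le) (use t in \<open>auto simp: c0_def\<close>)
    then show "Xweight \<alpha>2 s b K2 \<tau> \<le> x2 * 2 powr \<bar>b\<bar>"
      unfolding Xweight_def x2_def using pos(2) unfolding x2_def by (simp add: jbr0)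
  next
    fix \<tau> assume t: "\<tau> \<in> {a0+c0+1/2..a0+c0+3/2}"
    have "(1+2) powr (-\<bar>b-1\<bar>) * jbr H powr (b-1) \<le> jbr (\<tau> - \<alpha>1 * (real_of_int (K1+K2))^3) powr (b-1)"
      by (rule jbr_powr_ge) (use t in \<open>auto simp: Hac\<close>)
    then show "x * 3 powr (-\<bar>b-1\<bar>) * h powr (b-1) \<le> Xweight \<alpha>1 s (b-1) (K1+K2) \<tau>"
      unfolding Xweight_def x_def h_def using pos(3) unfolding x_def
      by (simp add: mult.assoc)
  qed (use pos in auto)
  have B: "x * 3 powr (-\<bar>b-1\<bar>) * k / (8*pi^2) \<le> \<bar>C\<bar> * (x1 * (2 powr \<bar>b\<bar> * h powr b)) * (x2 * 2 powr \<bar>b\<bar>)"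
  unfolding k_def proof (rule est_step[OF est mz, where a="a0 - H" and c=c0])
    fix \<tau> assume t: "\<tau> \<in> {a0-H..a0-H+1}"
    have "jbr (\<tau> - \<alpha>1 * (real_of_int K1)^3) powr b \<le> (1+1) powr \<bar>b\<bar> * jbr (-H) powr b"
      by (rule jbr_powr_le) (use t in \<open>auto simp: a0_def\<close>)
    then show "Xweight \<alpha>1 s b K1 \<tau> \<le> x1 * (2 powr \<bar>b\<bar> * h powr b)"
      unfolding Xweight_def x1_def h_def using pos(1) unfolding x1_def by (simp add: jbr_uminus)
  next
    fix \<tau> assume t: "\<tau> \<in> {c0..c0+1}"
    have "jbr (\<tau> - \<alpha>2 * (real_of_int K2)^3) powr b \<le> (1+1) powr \<bar>b\<bar> * jbr 0 powr b"
      by (rule jbr_powr_le) (use t in \<open>auto simp: c0_def\<close>)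
    then show "Xweight \<alpha>2 s b K2 \<tau> \<le> x2 * 2 powr \<bar>b\<bar>"
      unfolding Xweight_def x2_def using pos(2) unfolding x2_def by (simp add: jbr0)
  next
    fix \<tau> assume t: "\<tau> \<in> {a0-H+c0+1/2..a0-H+c0+3/2}"
    have "(1+2) powr (-\<bar>b-1\<bar>) * jbr 0 powr (b-1) \<le> jbr (\<tau> - \<alpha>1 * (real_of_int (K1+K2))^3) powr (b-1)"
      by (rule jbr_powr_ge) (use t in \<open>auto simp: Hac\<close>)
    then show "x * 3 powr (-\<bar>b-1\<bar>) \<le> Xweight \<alpha>1 s (b-1) (K1+K2) \<tau>"
      unfolding Xweight_def x_def using pos(3) unfolding x_def
      by (simp add: jbr0)
  qed (use pos in auto)
  have A': "Pfac s K1 K2 * h powr (b-1) \<le> Q"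
  proof -
    have "Pfac s K1 K2 * h powr (b-1) = (x * 3 powr (-\<bar>b-1\<bar>) * h powr (b-1) * k / (8*pi^2)) * (8*pi^2 * 3 powr \<bar>b-1\<bar> / (x1*x2))"
      using pos unfolding P by (simp add: powr_minus field_simps)
    also have "\<dots> \<le> (\<bar>C\<bar> * (x1 * 2 powr \<bar>b\<bar>) * (x2 * 2 powr \<bar>b\<bar>)) * (8*pi^2 * 3 powr \<bar>b-1\<bar> / (x1*x2))"
      using pos by (intro mult_right_mono A) auto
    also have "\<dots> = 8*pi^2*\<bar>C\<bar> * 2 powr \<bar>b\<bar> * 2 powr \<bar>b\<bar> * 3 powr \<bar>b-1\<bar>"
      using pos by (simp add: field_simps)
    also have "\<dots> \<le> Q"
    proof -
      have g0: "0 \<le> 8*pi^2*\<bar>C\<bar> * 2 powr \<bar>b\<bar> * 2 powr \<bar>b\<bar> * 3 powr \<bar>b-1\<bar>" by simp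
      have g1: "1 \<le> (3::real) powr \<bar>b\<bar>" by (rule ge_one_powr_ge_zero) auto
      show ?thesis unfolding Q_def using mult_left_mono[OF g1 g0] by simp
    qed
    finally show ?thesis .
  qed
  have B': "Pfac s K1 K2 * h powr (-b) \<le> Q"
  proof -
    have "Pfac s K1 K2 * h powr (-b) = (x * 3 powr (-\<bar>b-1\<bar>) * k / (8*pi^2)) * (8*pi^2 * 3 powr \<bar>b-1\<bar> / (x1*x2*h powr b))"
      using pos h1 unfolding P by (simp add: powr_minus field_simps)
    also have "\<dots> \<le> (\<bar>C\<bar> * (x1 * (2 powr \<bar>b\<bar> * h powr b)) * (x2 * 2 powr \<bar>b\<bar>)) * (8*pi^2 * 3 powr \<bar>b-1\<bar> / (x1*x2*h powr b))"
      using pos h1 by (intro mult_right_mono B) auto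
    also have "\<dots> = 8*pi^2*\<bar>C\<bar> * 2 powr \<bar>b\<bar> * 2 powr \<bar>b\<bar> * 3 powr \<bar>b-1\<bar>"
      using pos h1 by (simp add: field_simps)
    also have "\<dots> \<le> Q"
    proof -
      have g0: "0 \<le> 8*pi^2*\<bar>C\<bar> * 2 powr \<bar>b\<bar> * 2 powr \<bar>b\<bar> * 3 powr \<bar>b-1\<bar>" by simp
      have g1: "1 \<le> (3::real) powr \<bar>b\<bar>" by (rule ge_one_powr_ge_zero) auto
      show ?thesis unfolding Q_def using mult_left_mono[OF g1 g0] by simp
    qed
    finally show ?thesis .
  qed
  show ?thesis
  proof (cases "b \<ge> 1/2")
    case True
    have "h powr (-1/2) \<le> h powr (b-1)" using h1 True by (intro powr_mono) auto
    then have "Pfac s K1 K2 * h powr (-1/2) \<le> Pfac s K1 K2 * h powr (b-1)"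
      using P0 by (intro mult_left_mono) auto
    then show ?thesis using A' unfolding Q_def H_def h_def by linarith
  next
    case False
    have "h powr (-1/2) \<le> h powr (-b)" using h1 False by (intro powr_mono) auto
    then have "Pfac s K1 K2 * h powr (-1/2) \<le> Pfac s K1 K2 * h powr (-b)"
      using P0 by (intro mult_left_mono) auto
    then show ?thesis using B' unfolding Q_def H_def h_def by linarith
  qed
qed

lemma fail_seq:
  assumes "\<And>M. \<exists>K1 K2::int. (mz \<longrightarrow> K2 \<noteq> 0) \<and> M < Pfac s K1 K2 * jbr (Hres \<alpha>1 \<alpha>2 K1 K2) powr (-1/2)"
  shows "\<not> bilinear_est \<alpha>1 \<alpha>2 s b mz"
proof
  assume "bilinear_est \<alpha>1 \<alpha>2 s b mz"
  then obtain C where est: "\<forall>u1 u2. inX \<alpha>1 s b u1 \<longrightarrow> inX \<alpha>2 s b u2 \<longrightarrow>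
        (mz \<longrightarrow> (\<forall>\<tau>. u2 0 \<tau> = 0)) \<longrightarrow>
        Xnorm2 \<alpha>1 s (b - 1) (dxprod_ft u1 u2)
          \<le> ennreal (C\<^sup>2) * Xnorm2 \<alpha>1 s b u1 * Xnorm2 \<alpha>2 s b u2"
    unfolding bilinear_est_def by blast
  obtain K1 K2 :: int where mz: "mz \<longrightarrow> K2 \<noteq> 0" and
    gt: "8*pi^2*\<bar>C\<bar> * 2 powr \<bar>b\<bar> * 2 powr \<bar>b\<bar> * 3 powr \<bar>b-1\<bar> * 3 powr \<bar>b\<bar> < Pfac s K1 K2 * jbr (Hres \<alpha>1 \<alpha>2 K1 K2) powr (-1/2)"
    using assms by blast
  have "Pfac s K1 K2 * jbr (Hres \<alpha>1 \<alpha>2 K1 K2) powr (-1/2)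
     \<le> 8*pi^2*\<bar>C\<bar> * 2 powr \<bar>b\<bar> * 2 powr \<bar>b\<bar> * 3 powr \<bar>b-1\<bar> * 3 powr \<bar>b\<bar>"
    by (rule fail_pair[OF est mz])
  with gt show False by linarith
qed
lemma large:
  fixes e c M :: real assumes e: "e > 0" and c: "c > 0"
  shows "\<exists>B\<ge>0. \<forall>x. x > B \<longrightarrow> M < c * x powr e"
proof (intro exI[of _ "(\<bar>M\<bar>/c + 1) powr (1/e)"] conjI allI impI)
  fix x assume x: "x > (\<bar>M\<bar>/c + 1) powr (1/e)"
  have "\<bar>M\<bar>/c + 1 = ((\<bar>M\<bar>/c + 1) powr (1/e)) powr e"
    using e c by (simp add: powr_powr)
  also have "\<dots> < x powr e"
    using x e c by (intro powr_less_mono2) auto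
  finally have "\<bar>M\<bar>/c < x powr e" by simp
  then have "\<bar>M\<bar> < c * x powr e" using c by (simp add: field_simps)
  then show "M < c * x powr e" by linarith
qed simp

lemma powr_between:
  fixes L U n y s :: real
  assumes "0 < L" "L \<le> U" "0 < n" "L * n \<le> y" "y \<le> U * n"
  shows "min (L powr s) (U powr s) * n powr s \<le> y powr s"
    and "y powr s \<le> max (L powr s) (U powr s) * n powr s"
proof -
  define t where "t = y / n"
  have t: "L \<le> t" "t \<le> U" using assms by (auto simp: t_def field_simps)
  have y: "y powr s = t powr s * n powr s" using assms by (simp add: t_def powr_divide)
  have "min (L powr s) (U powr s) \<le> t powr s \<and> t powr s \<le> max (L powr s) (U powr s)"
  proof (cases "s \<ge> 0")
    case True
    have "L powr s \<le> t powr s" using t assms True by (intro powr_mono2) auto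
    moreover have "t powr s \<le> U powr s" using t assms True by (intro powr_mono2) auto
    ultimately show ?thesis by linarith
  next
    case False
    have "U powr s \<le> t powr s" using t assms False by (intro powr_mono2') auto
    moreover have "t powr s \<le> L powr s" using t assms False by (intro powr_mono2') auto
    ultimately show ?thesis by linarith
  qed
  then have a: "min (L powr s) (U powr s) \<le> t powr s" and b: "t powr s \<le> max (L powr s) (U powr s)" by auto
  show "min (L powr s) (U powr s) * n powr s \<le> y powr s" unfolding y
    by (rule mult_right_mono[OF a]) simp
  show "y powr s \<le> max (L powr s) (U powr s) * n powr s" unfolding y
    by (rule mult_right_mono[OF b]) simp
qed
lemma case_d: "\<not> bilinear_est \<alpha>1 \<alpha>2 s b False"
proof (rule fail_seq)
  fix M :: real
  define N :: int where "N = \<lceil>\<bar>M\<bar>\<rceil> + 1"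
  have N: "real_of_int N > M" "N > 0" unfolding N_def by linarith+
  have "Hres \<alpha>1 \<alpha>2 N 0 = 0" by (simp add: Hres_def)
  moreover have "Pfac s N 0 = real_of_int N"
    using N jbr_pos[of "real_of_int N"] by (simp add: Pfac_def jbr0)
  ultimately have "Pfac s N 0 * jbr (Hres \<alpha>1 \<alpha>2 N 0) powr (-1/2) = real_of_int N"
    by (simp add: jbr0)
  then show "\<exists>K1 K2::int. (False \<longrightarrow> K2 \<noteq> 0) \<and> M < Pfac s K1 K2 * jbr (Hres \<alpha>1 \<alpha>2 K1 K2) powr (-1/2)"
    using N by (intro exI[of _ N] exI[of _ 0]) simp
qed

lemma Pfac_opp:
  fixes N :: nat assumes "N > 0"
  shows "Pfac s (int N) (- int N) = real N * (1 + real N) powr (-2 * s)"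
  using assms by (simp add: Pfac_def jbr_def powr_minus powr_mult_base field_simps flip: powr_add)

lemma Hres_opp: "Hres \<alpha>1 \<alpha>2 (int N) (- int N) = (\<alpha>1 - \<alpha>2) * real N ^ 3"
  by (simp add: Hres_def algebra_simps)

lemma case_b:
  assumes s: "s < 1/2"
  shows "\<not> bilinear_est \<alpha> \<alpha> s b True"
proof (rule fail_seq)
  fix M :: real
  obtain B where B: "B \<ge> 0" "\<And>x. x > B \<Longrightarrow> M < 1/2 * x powr (1 - 2 * s)"
    using large[of "1-2 * s" "1/2" M] s by auto
  define N :: nat where "N = nat \<lceil>B\<rceil> + 1"
  have N: "N > 0" "1 + real N > B" unfolding N_def using B by linarith+
  have "Pfac s (int N) (- int N) * jbr (Hres \<alpha> \<alpha> (int N) (- int N)) powr (-1/2) = real N * (1 + real N) powr (-2 * s)"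
    using N by (simp add: Pfac_opp Hres_opp jbr0)
  also have "\<dots> \<ge> (1 + real N)/2 * (1 + real N) powr (-2 * s)"
    using N by (intro mult_right_mono) auto
  finally have ge0: "Pfac s (int N) (- int N) * jbr (Hres \<alpha> \<alpha> (int N) (- int N)) powr (-1/2) \<ge> (1 + real N)/2 * (1 + real N) powr (-2 * s)" .
  have e: "(1 + real N) powr (1 - 2 * s) = (1 + real N) powr 1 * (1 + real N) powr (-2 * s)"
    by (subst powr_add[symmetric]) simp
  have ge: "Pfac s (int N) (- int N) * jbr (Hres \<alpha> \<alpha> (int N) (- int N)) powr (-1/2) \<ge> 1/2 * (1 + real N) powr (1 - 2 * s)"
    using ge0 unfolding e by simp
  show "\<exists>K1 K2::int. (True \<longrightarrow> K2 \<noteq> 0) \<and> M < Pfac s K1 K2 * jbr (Hres \<alpha> \<alpha> K1 K2) powr (-1/2)"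
    using B(2)[OF N(2)] ge N by (intro exI[of _ "int N"] exI[of _ "- int N"]) auto
qed

lemma case_a:
  assumes s: "s < -1/4"
  shows "\<not> bilinear_est \<alpha>1 \<alpha>2 s b True"
proof (rule fail_seq)
  fix M :: real
  define d where "d = \<alpha>1 - \<alpha>2"
  define c where "c = (1 + \<bar>d\<bar>) powr (-1/2)"
  have c: "c > 0" unfolding c_def by simp
  obtain B where B: "B \<ge> 0" "\<And>x. x > B \<Longrightarrow> M < c * x powr (-1/2 - 2 * s)"
    using large[of "-1/2-2 * s" c M] s c by auto
  define N :: nat where "N = nat \<lceil>B\<rceil> + 1"
  have N: "N > 0" "real N > B" unfolding N_def using B by linarith+
  have N1: "real N \<ge> 1" using N by simp
  have j: "jbr (d * real N ^ 3) \<le> (1 + \<bar>d\<bar>) * real N powr 3"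
  proof -
    have "real N ^ 3 \<ge> 1" using N1 by simp
    then show ?thesis unfolding jbr_def using N1
      by (simp add: abs_mult powr_realpow algebra_simps)
  qed
  have j2: "jbr (d * real N ^ 3) powr (-1/2) \<ge> ((1 + \<bar>d\<bar>) * real N powr 3) powr (-1/2)"
    using j jbr_pos by (intro powr_mono2') auto
  have p: "(1 + real N) powr (-2 * s) \<ge> real N powr (-2 * s)"
    using s by (intro powr_mono2) auto
  have "Pfac s (int N) (- int N) * jbr (Hres \<alpha>1 \<alpha>2 (int N) (- int N)) powr (-1/2)
      = real N * (1 + real N) powr (-2 * s) * jbr (d * real N ^ 3) powr (-1/2)"
    using N by (simp add: Pfac_opp Hres_opp d_def)
  also have "\<dots> \<ge> real N * real N powr (-2 * s) * (((1 + \<bar>d\<bar>) * real N powr 3) powr (-1/2))"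
    using p j2 by (intro mult_mono) auto
  also have "real N * real N powr (-2 * s) * (((1 + \<bar>d\<bar>) * real N powr 3) powr (-1/2)) = c * real N powr (-1/2 - 2 * s)"
  proof -
    have e2: "((1 + \<bar>d\<bar>) * real N powr 3) powr (-1/2) = (1 + \<bar>d\<bar>) powr (-1/2) * real N powr (-3/2)"
    proof -
      have e2a: "(real N powr 3) powr (-1/2) = real N powr (-3/2)" by (subst powr_powr) simp
      have "((1 + \<bar>d\<bar>) * real N powr 3) powr (-1/2) = (1 + \<bar>d\<bar>) powr (-1/2) * (real N powr 3) powr (-1/2)"
        by (rule powr_mult)
      then show ?thesis by (simp only: e2a)
    qed
    have e4: "real N powr (-1/2 - 2 * s) = real N powr 1 * real N powr (-2 * s) * real N powr (-3/2)"
    proof -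
      have "-1/2 - 2 * s = 1 + (-2 * s) + (-3/2)" by simp
      then show ?thesis by (simp only: powr_add)
    qed
    show ?thesis unfolding e2 e4 c_def using N1 by simp
  qed
  finally have ge: "c * real N powr (-1/2 - 2 * s) \<le> Pfac s (int N) (- int N) * jbr (Hres \<alpha>1 \<alpha>2 (int N) (- int N)) powr (-1/2)" .
  show "\<exists>K1 K2::int. (True \<longrightarrow> K2 \<noteq> 0) \<and> M < Pfac s K1 K2 * jbr (Hres \<alpha>1 \<alpha>2 K1 K2) powr (-1/2)"
    using B(2)[OF N(2)] ge N by (intro exI[of _ "int N"] exI[of _ "- int N"]) auto
qed

lemma Hres_c:
  fixes m n :: int and \<rho> \<alpha>1 :: real
  shows "Hres \<alpha>1 ((\<rho>^2 + 3)/12 * \<alpha>1) (m - 3*n) (6*n)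
     = 18 * \<alpha>1 * real_of_int n * (\<rho> * real_of_int n - real_of_int m) * (\<rho> * real_of_int n + real_of_int m)"
  by (simp add: Hres_def algebra_simps power3_eq_cube power2_eq_square)

lemma jbr_nz: "jbr v \<noteq> 0" using jbr_pos[of v] by simp

lemma case_c_gen:
  fixes \<rho> \<mu> s \<alpha>1 :: real
  assumes \<rho>0: "\<rho> \<ge> 0" and \<rho>3: "\<rho> \<noteq> 3" and \<mu>1: "1 \<le> \<mu>" and \<mu>3: "\<mu> \<le> 3" and s: "s < (\<mu>-1)/2"
    and approx: "\<And>B. \<exists>m n::int. real_of_int n > B \<and> \<bar>\<rho> - real_of_int m / real_of_int n\<bar> \<le> real_of_int n powr (-\<mu>)"
  shows "\<not> bilinear_est \<alpha>1 ((\<rho>^2+3)/12 * \<alpha>1) s b True"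
proof (rule fail_seq)
  fix M :: real
  define \<delta> where "\<delta> = \<bar>\<rho> - 3\<bar>/2"
  define L where "L = min \<delta> 1"
  define U where "U = \<rho> + 7"
  define D where "D = 18 * \<bar>\<alpha>1\<bar> * (2*\<rho>+1)"
  define e where "e = (\<mu>-1)/2 - s"
  define mn where "mn = min (L powr s) (U powr s)"
  define mx where "mx = max (L powr s) (U powr s)"
  define c where "c = \<delta> * mn / mx^2 * (1+D) powr (-1/2)"
  have \<delta>0: "\<delta> > 0" using \<rho>3 by (simp add: \<delta>_def)
  have L0: "0 < L" "L \<le> U" "L \<le> \<delta>" "L \<le> 1" using \<delta>0 \<rho>0 by (auto simp: L_def U_def)
  have mn0: "mn > 0" using L0 by (auto simp: mn_def)
  have mx0: "mx > 0" using L0 by (simp add: mx_def less_max_iff_disj)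
  have D0: "D \<ge> 0" using \<rho>0 by (simp add: D_def)
  have c0: "c > 0" unfolding c_def using \<delta>0 mn0 mx0 D0 by simp
  have e0: "e > 0" using s by (simp add: e_def)
  obtain B where B: "B \<ge> 0" "\<And>x. x > B \<Longrightarrow> M < c * x powr e" using large[OF e0 c0] by auto
  obtain m n :: int where n: "real_of_int n > max B (max 1 (1/\<delta>))"
      and ap: "\<bar>\<rho> - real_of_int m / real_of_int n\<bar> \<le> real_of_int n powr (-\<mu>)"
    using approx by blast
  define x where "x = real_of_int n"
  define y where "y = real_of_int m"
  have x1: "x > 1" and xB: "x > B" and x\<delta>: "1 / \<delta> < x" using n by (auto simp: x_def)
  have x\<delta>': "1 \<le> \<delta> * x" using x\<delta> \<delta>0 by (simp add: field_simps)
  have cl2: "\<bar>\<rho> * x - y\<bar> \<le> x powr (1-\<mu>)"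
  proof -
    have "\<bar>\<rho> * x - y\<bar> = x * \<bar>\<rho> - y / x\<bar>" using x1 by (simp add: field_simps abs_mult flip: abs_of_pos)
    also have "\<dots> \<le> x * x powr (-\<mu>)" using ap x1 by (intro mult_left_mono) (auto simp: x_def y_def)
    also have "\<dots> = x powr (1-\<mu>)" using x1 by (simp add: powr_diff powr_minus field_simps)
    finally show ?thesis .
  qed
  have xp1: "x powr (1-\<mu>) \<le> 1" using powr_mono[of "1-\<mu>" 0 x] x1 \<mu>1 by simp
  have cl: "\<bar>\<rho> * x - y\<bar> \<le> 1" using cl2 xp1 by linarith
  have xr3: "\<bar>\<rho> * x - 3 * x\<bar> = 2 * \<delta> * x" using x1 by (simp add: \<delta>_def abs_mult flip: left_diff_distrib)
  have k1lo: "\<delta> * x \<le> \<bar>y - 3 * x\<bar>" using xr3 cl x\<delta>' by linarith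
  have rx: "\<rho> * x \<ge> 0" using \<rho>0 x1 by simp
  have cla: "\<rho> * x - 1 \<le> y" "y \<le> \<rho> * x + 1" using cl by (auto simp: abs_le_iff)
  have k1hi: "\<bar>y - 3 * x\<bar> \<le> 1 + (\<rho> + 3) * x" using cla rx x1 by (simp add: abs_le_iff algebra_simps)
  have klo: "2 * x \<le> \<bar>y + 3 * x\<bar>" using cla rx x1 by (simp add: abs_le_iff algebra_simps)
  have khi: "\<bar>y + 3 * x\<bar> \<le> 1 + (\<rho> + 3) * x" using cla rx x1 by (simp add: abs_le_iff algebra_simps)
  define J1 where "J1 = jbr (real_of_int (m - 3*n))"
  define J2 where "J2 = jbr (real_of_int (6*n))"
  define J where "J = jbr (real_of_int (m - 3*n + 6*n))"
  have J1e: "J1 = 1 + \<bar>y - 3 * x\<bar>" by (simp add: J1_def jbr_def x_def y_def)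
  have J2e: "J2 = 1 + 6 * x" using x1 by (simp add: J2_def jbr_def x_def)
  have Je: "J = 1 + \<bar>y + 3 * x\<bar>" by (simp add: J_def jbr_def x_def y_def)
  have Lxd: "L * x \<le> \<delta> * x" using L0 x1 by (intro mult_right_mono) auto
  have Lx1: "L * x \<le> x" using L0 x1 by (simp add: mult_le_cancel_right1)
  have Ux: "U * x = \<rho> * x + 7 * x" by (simp add: U_def algebra_simps)
  have ry: "(\<rho> + 3) * x = \<rho> * x + 3 * x" by (simp add: algebra_simps)
  have J1b: "L * x \<le> J1" "J1 \<le> U * x"
    using k1lo k1hi x1 Lxd Ux ry rx unfolding J1e by linarith+
  have J2b: "L * x \<le> J2" "J2 \<le> U * x"
    using x1 Lx1 Ux rx unfolding J2e by linarith+
  have Jb: "L * x \<le> J" "J \<le> U * x"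
    using klo khi x1 Lx1 Ux ry rx unfolding Je by linarith+
  have x0: "x > 0" using x1 by simp
  have J1s: "J1 powr s \<le> mx * x powr s" unfolding mx_def by (rule powr_between(2)[OF L0(1,2) x0 J1b])
  have J2s: "J2 powr s \<le> mx * x powr s" unfolding mx_def by (rule powr_between(2)[OF L0(1,2) x0 J2b])
  have Js: "mn * x powr s \<le> J powr s" unfolding mn_def by (rule powr_between(1)[OF L0(1,2) x0 Jb])
  have Pge: "Pfac s (m - 3*n) (6*n) \<ge> \<delta> * mn / mx^2 * x * x powr (-s)"
  proof -
    have "Pfac s (m - 3*n) (6*n) = \<bar>y - 3 * x\<bar> * J powr s / (J1 powr s * J2 powr s)"
      by (simp add: Pfac_def J_def J1_def J2_def x_def y_def)
    also have "\<dots> \<ge> (\<delta> * x) * (mn * x powr s) / ((mx * x powr s) * (mx * x powr s))"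
      using k1lo Js J1s J2s x0 mn0 mx0 \<delta>0
      by (intro frac_le mult_mono mult_mono' mult_pos_pos) (auto simp: J1_def J2_def jbr_pos jbr_nz)
    also have "(\<delta> * x) * (mn * x powr s) / ((mx * x powr s) * (mx * x powr s)) = \<delta> * mn / mx^2 * x * x powr (-s)"
      using x0 mx0 by (simp add: powr_minus field_simps power2_eq_square)
    finally show ?thesis .
  qed
  have "0 \<le> \<delta> * mn / mx^2 * x * x powr (-s)" using \<delta>0 mn0 mx0 x0 by simp
  with Pge have P0: "0 \<le> Pfac s (m - 3*n) (6*n)" by linarith
  have Hb: "\<bar>Hres \<alpha>1 ((\<rho>^2+3)/12 * \<alpha>1) (m - 3*n) (6*n)\<bar> \<le> D * x powr (3-\<mu>)"
  proof -
    have a: "\<bar>\<rho> * x + y\<bar> \<le> (2*\<rho>+1) * x" using cla rx x1 by (simp add: abs_le_iff algebra_simps)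
    have "\<bar>Hres \<alpha>1 ((\<rho>^2+3)/12 * \<alpha>1) (m - 3*n) (6*n)\<bar> = 18 * \<bar>\<alpha>1\<bar> * x * \<bar>\<rho> * x - y\<bar> * \<bar>\<rho> * x + y\<bar>"
      unfolding Hres_c using x0 by (simp add: abs_mult x_def y_def)
    also have "\<dots> \<le> 18 * \<bar>\<alpha>1\<bar> * x * x powr (1-\<mu>) * ((2*\<rho>+1) * x)"
      using cl2 a x0 by (intro mult_mono mult_left_mono) auto
    also have "\<dots> = D * (x * x powr (1-\<mu>) * x)" by (simp add: D_def algebra_simps)
    also have "x * x powr (1-\<mu>) * x = x powr (3-\<mu>)"
    proof -
      have "3 - \<mu> = 1 + (1-\<mu>) + 1" by simp
      then have "x powr (3-\<mu>) = x powr 1 * x powr (1-\<mu>) * x powr 1" by (simp only: powr_add)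
      then show ?thesis using x0 by simp
    qed
    finally show ?thesis .
  qed
  have xp3: "x powr (3-\<mu>) \<ge> 1" using x1 \<mu>3 by (intro ge_one_powr_ge_zero) auto
  have jH: "jbr (Hres \<alpha>1 ((\<rho>^2+3)/12 * \<alpha>1) (m - 3*n) (6*n)) \<le> (1+D) * x powr (3-\<mu>)"
    using Hb xp3 D0 unfolding jbr_def by (simp add: algebra_simps)
  have jH2: "jbr (Hres \<alpha>1 ((\<rho>^2+3)/12 * \<alpha>1) (m - 3*n) (6*n)) powr (-1/2) \<ge> ((1+D) * x powr (3-\<mu>)) powr (-1/2)"
    using jH jbr_pos by (intro powr_mono2') auto
  have e3: "((1+D) * x powr (3-\<mu>)) powr (-1/2) = (1+D) powr (-1/2) * x powr (-(3-\<mu>)/2)"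
  proof -
    have "((1+D) * x powr (3-\<mu>)) powr (-1/2) = (1+D) powr (-1/2) * (x powr (3-\<mu>)) powr (-1/2)"
      by (rule powr_mult)
    also have "(x powr (3-\<mu>)) powr (-1/2) = x powr (-(3-\<mu>)/2)"
    proof -
      have "(3-\<mu>) * (-1/2) = -(3-\<mu>)/2" by (simp add: field_simps)
      then show ?thesis by (simp only: powr_powr)
    qed
    finally show ?thesis .
  qed
  have tot: "c * x powr e \<le> Pfac s (m - 3*n) (6*n) * jbr (Hres \<alpha>1 ((\<rho>^2+3)/12 * \<alpha>1) (m - 3*n) (6*n)) powr (-1/2)"
  proof -
    have "c * x powr e = (\<delta> * mn / mx^2 * x * x powr (-s)) * ((1+D) powr (-1/2) * x powr (-(3-\<mu>)/2))"
    proof -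
      have "e = 1 + (-s) + (-(3-\<mu>)/2)" by (simp add: e_def field_simps)
      then have "x powr e = x powr 1 * x powr (-s) * x powr (-(3-\<mu>)/2)" by (simp only: powr_add)
      then show ?thesis using x0 by (simp add: c_def)
    qed
    also have "\<dots> \<le> Pfac s (m - 3*n) (6*n) * jbr (Hres \<alpha>1 ((\<rho>^2+3)/12 * \<alpha>1) (m - 3*n) (6*n)) powr (-1/2)"
      using Pge jH2 P0 unfolding e3[symmetric] using \<delta>0 mn0 mx0 x0
      by (intro mult_mono) auto
    finally show ?thesis .
  qed
  have "n > 0" using x1 by (simp add: x_def)
  then show "\<exists>K1 K2::int. (True \<longrightarrow> K2 \<noteq> 0) \<and> M < Pfac s K1 K2 * jbr (Hres \<alpha>1 ((\<rho>^2+3)/12 * \<alpha>1) K1 K2) powr (-1/2)"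
    using B(2)[OF xB] tot by (intro exI[of _ "m - 3*n"] exI[of _ "6*n"]) auto
qed


definition Papp :: "real \<Rightarrow> real \<Rightarrow> (int \<times> int) set" where
  "Papp \<rho> \<mu> = {(m, n::int). n \<noteq> 0 \<and>
        0 < \<bar>\<rho> - real_of_int m / real_of_int n\<bar> \<and>
        \<bar>\<rho> - real_of_int m / real_of_int n\<bar> < \<bar>real_of_int n\<bar> powr (-\<mu>)}"

lemma irr_exp_Papp: "irr_exp \<rho> = Sup (ereal ` {\<mu>. infinite (Papp \<rho> \<mu>)})"
  unfolding irr_exp_def Papp_def by simp

lemma Papp_mono:
  assumes "\<mu>' \<le> \<mu>" shows "Papp \<rho> \<mu> \<subseteq> Papp \<rho> \<mu>'"
proof
  fix p assume p: "p \<in> Papp \<rho> \<mu>"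
  obtain m n where pe: "p = (m, n)" by fastforce
  have n: "n \<noteq> 0" and lt: "\<bar>\<rho> - real_of_int m / real_of_int n\<bar> < \<bar>real_of_int n\<bar> powr (-\<mu>)"
    and pos: "0 < \<bar>\<rho> - real_of_int m / real_of_int n\<bar>" using p by (auto simp: Papp_def pe)
  have "\<bar>real_of_int n\<bar> \<ge> 1" using n by linarith
  then have "\<bar>real_of_int n\<bar> powr (-\<mu>) \<le> \<bar>real_of_int n\<bar> powr (-\<mu>')"
    using assms by (intro powr_mono) auto
  then show "p \<in> Papp \<rho> \<mu>'" using n lt pos by (auto simp: Papp_def pe)
qed

lemma finite_bounded_pairs:
  fixes B :: real
  assumes "\<And>m n. (m, n) \<in> S \<Longrightarrow> n \<noteq> 0 \<and> \<bar>\<rho> - real_of_int m / real_of_int n\<bar> < 1 \<and> \<bar>real_of_int n\<bar> \<le> B"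
  shows "finite S"
proof -
  define R :: int where "R = \<lceil>B * (\<bar>\<rho>\<bar> + 1) + B\<rceil>"
  have "S \<subseteq> {-R..R} \<times> {-R..R}"
  proof clarify
    fix m n assume mn: "(m, n) \<in> S"
    from assms[OF mn] have n: "n \<noteq> 0" and c: "\<bar>\<rho> - real_of_int m / real_of_int n\<bar> < 1"
      and b: "\<bar>real_of_int n\<bar> \<le> B" by auto
    have n1: "\<bar>real_of_int n\<bar> \<ge> 1" using n by linarith
    have "\<bar>real_of_int m / real_of_int n\<bar> \<le> \<bar>\<rho>\<bar> + 1" using c by linarith
    then have "\<bar>real_of_int m\<bar> \<le> (\<bar>\<rho>\<bar> + 1) * \<bar>real_of_int n\<bar>"
      using n by (simp add: abs_divide field_simps)
    also have "\<dots> \<le> (\<bar>\<rho>\<bar> + 1) * B" using b by (intro mult_left_mono) auto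
    finally have mb: "\<bar>real_of_int m\<bar> \<le> B * (\<bar>\<rho>\<bar> + 1)" by (simp add: algebra_simps)
    have B0: "B \<ge> 0" using b by linarith
    have "B * (\<bar>\<rho>\<bar> + 1) \<ge> 0" using B0 by simp
    then have "\<bar>real_of_int m\<bar> \<le> real_of_int R" "\<bar>real_of_int n\<bar> \<le> real_of_int R"
      using mb b B0 unfolding R_def by linarith+
    then show "m \<in> {-R..R} \<and> n \<in> {-R..R}" by auto
  qed
  then show ?thesis by (rule finite_subset) auto
qed

lemma approx_of_infinite:
  assumes inf: "infinite (Papp \<rho> \<mu>)" and \<mu>0: "\<mu> \<ge> 0"
  shows "\<exists>m n::int. real_of_int n > B \<and> \<bar>\<rho> - real_of_int m / real_of_int n\<bar> \<le> real_of_int n powr (-\<mu>)"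
proof (rule ccontr)
  assume no: "\<not> ?thesis"
  have "finite (Papp \<rho> \<mu>)"
  proof (rule finite_bounded_pairs[where B = "max B 0"])
    fix m n assume mn: "(m, n) \<in> Papp \<rho> \<mu>"
    then have n: "n \<noteq> 0" and lt: "\<bar>\<rho> - real_of_int m / real_of_int n\<bar> < \<bar>real_of_int n\<bar> powr (-\<mu>)"
      by (auto simp: Papp_def)
    have n1: "\<bar>real_of_int n\<bar> \<ge> 1" using n by linarith
    have "\<bar>real_of_int n\<bar> powr (-\<mu>) \<le> 1" using powr_mono[of "-\<mu>" 0 "\<bar>real_of_int n\<bar>"] n1 \<mu>0 n by simp
    then have c: "\<bar>\<rho> - real_of_int m / real_of_int n\<bar> < 1" using lt by linarith
    have "\<bar>real_of_int n\<bar> \<le> max B 0"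
    proof (rule ccontr)
      assume "\<not> \<bar>real_of_int n\<bar> \<le> max B 0"
      then have big: "\<bar>real_of_int n\<bar> > B" "\<bar>real_of_int n\<bar> > 0" by auto
      show False
      proof (cases "n > 0")
        case True
        then have "real_of_int n > B" "\<bar>\<rho> - real_of_int m / real_of_int n\<bar> \<le> real_of_int n powr (-\<mu>)"
          using big lt by auto
        then show False using no by blast
      next
        case False
        then have e: "real_of_int (-m) / real_of_int (-n) = real_of_int m / real_of_int n"
          "real_of_int (-n) = \<bar>real_of_int n\<bar>" by auto
        show False using no big lt e by (metis less_imp_le)
      qed
    qed
    then show "n \<noteq> 0 \<and> \<bar>\<rho> - real_of_int m / real_of_int n\<bar> < 1 \<and> \<bar>real_of_int n\<bar> \<le> max B 0"
      using n c by auto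
  qed
  then show False using inf by simp
qed

lemma rat_small:
  fixes p q :: int
  assumes q: "q > 0" and \<mu>: "\<mu> < 1"
  shows "infinite (Papp (real_of_int p / real_of_int q) \<mu>)"
proof
  assume fin: "finite (Papp (real_of_int p / real_of_int q) \<mu>)"
  define f where "f t = (p*t+1, q*t)" for t :: int
  have inj: "inj_on f {2..}" unfolding f_def inj_on_def using q by auto
  have sub: "f ` {2..} \<subseteq> Papp (real_of_int p / real_of_int q) \<mu>"
  proof (rule image_subsetI)
    fix t :: int assume t: "t \<in> {2..}"
    define x where "x = real_of_int q * real_of_int t"
    have "1 * 2 \<le> q * t" using q t by (intro mult_mono) auto
    then have "real_of_int (q * t) \<ge> 2" by linarith
    then have x1: "x > 1" unfolding x_def by simp
    have d: "real_of_int p / real_of_int q - real_of_int (p*t+1) / real_of_int (q*t) = - (1 / x)"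
      using q t x1 unfolding x_def by (simp add: field_simps)
    have "1 / x = x powr (-1)" using x1 by (simp add: powr_minus_divide)
    also have "\<dots> < x powr (-\<mu>)" using x1 \<mu> by (intro powr_less_mono) auto
    finally have "1 / x < x powr (-\<mu>)" .
    moreover have "\<bar>real_of_int (q*t)\<bar> = x" using x1 unfolding x_def by simp
    ultimately have mem: "q*t \<noteq> 0 \<and> 0 < \<bar>real_of_int p / real_of_int q - real_of_int (p*t+1) / real_of_int (q*t)\<bar>
      \<and> \<bar>real_of_int p / real_of_int q - real_of_int (p*t+1) / real_of_int (q*t)\<bar> < \<bar>real_of_int (q*t)\<bar> powr (-\<mu>)"
      unfolding d using x1 q t by auto
    then show "f t \<in> Papp (real_of_int p / real_of_int q) \<mu>"
      by (simp only: f_def Papp_def mem_Collect_eq prod.case simp_thms)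
  qed
  have "finite (f ` {2..})" using finite_subset[OF sub fin] .
  then have "finite {2::int..}" using finite_imageD inj by blast
  then show False using infinite_Ici by blast
qed

lemma rat_big:
  fixes p q :: int
  assumes q: "q > 0" and \<mu>: "\<mu> > 1"
  shows "finite (Papp (real_of_int p / real_of_int q) \<mu>)"
proof -
  obtain B where B: "B \<ge> 0" "\<And>x. x > B \<Longrightarrow> real_of_int q < 1 * x powr (\<mu> - 1)"
    using large[of "\<mu> - 1" 1 "real_of_int q"] \<mu> by auto
  show ?thesis
  proof (rule finite_bounded_pairs[where B = B and \<rho> = "real_of_int p / real_of_int q"])
    fix m n assume mn: "(m, n) \<in> Papp (real_of_int p / real_of_int q) \<mu>"
    define \<rho> where "\<rho> = real_of_int p / real_of_int q"
    from mn have n: "n \<noteq> 0" and lt: "\<bar>\<rho> - real_of_int m / real_of_int n\<bar> < \<bar>real_of_int n\<bar> powr (-\<mu>)"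
      and pos: "0 < \<bar>\<rho> - real_of_int m / real_of_int n\<bar>" by (auto simp: Papp_def \<rho>_def)
    define a where "a = \<bar>real_of_int n\<bar>"
    have a1: "a \<ge> 1" using n unfolding a_def by linarith
    have "a powr (-\<mu>) \<le> 1" using powr_mono[of "-\<mu>" 0 a] a1 \<mu> by simp
    then have c: "\<bar>\<rho> - real_of_int m / real_of_int n\<bar> < 1" using lt unfolding a_def by linarith
    have de: "\<rho> - real_of_int m / real_of_int n = real_of_int (p*n - q*m) / (real_of_int q * real_of_int n)"
      using n q unfolding \<rho>_def by (simp add: field_simps)
    have nz: "p*n - q*m \<noteq> 0"
    proof
      assume "p*n - q*m = 0"
      then have "real_of_int (p*n - q*m) = 0" by simp
      then show False using pos unfolding de by simp
    qed
    then have "\<bar>real_of_int (p*n - q*m)\<bar> \<ge> 1" by linarith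
    then have ge: "\<bar>\<rho> - real_of_int m / real_of_int n\<bar> \<ge> 1 / (real_of_int q * a)"
      unfolding de a_def using q n by (simp add: abs_divide abs_mult divide_right_mono)
    have "a \<le> B"
    proof (rule ccontr)
      assume "\<not> a \<le> B"
      then have "real_of_int q < a powr (\<mu> - 1)" using B(2) by auto
      moreover have "1 / (real_of_int q * a) < a powr (-\<mu>)" using ge lt unfolding a_def by linarith
      then have "1 < real_of_int q * (a * a powr (-\<mu>))" using q a1 by (simp add: field_simps)
      moreover have "a * a powr (-\<mu>) = a powr (1 - \<mu>)" using a1 by (simp add: powr_diff powr_minus field_simps)
      ultimately have "1 < real_of_int q * a powr (1 - \<mu>)" "real_of_int q < a powr (\<mu> - 1)" by auto
      moreover have "a powr (1 - \<mu>) * a powr (\<mu> - 1) = 1" using a1 by (simp flip: powr_add)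
      ultimately have "real_of_int q * a powr (1 - \<mu>) < a powr (\<mu> - 1) * a powr (1 - \<mu>)"
        using a1 by (intro mult_strict_right_mono) auto
      then show False using \<open>1 < real_of_int q * a powr (1 - \<mu>)\<close> \<open>a powr (1 - \<mu>) * a powr (\<mu> - 1) = 1\<close>
        by (simp add: mult.commute)
    qed
    then show "n \<noteq> 0 \<and> \<bar>real_of_int p / real_of_int q - real_of_int m / real_of_int n\<bar> < 1 \<and> \<bar>real_of_int n\<bar> \<le> B"
      using n c unfolding a_def \<rho>_def by auto
  qed
qed

lemma irr_exp_rat:
  assumes "\<rho> \<in> \<rat>" shows "irr_exp \<rho> = 1"
proof -
  obtain p q :: int where q: "q > 0" and \<rho>: "\<rho> = real_of_int p / real_of_int q"
    using Rats_cases'[OF assms] by metis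
  define S where "S = {\<mu>. infinite (Papp \<rho> \<mu>)}"
  have le: "Sup (ereal ` S) \<le> 1"
  proof (rule Sup_least, clarify)
    fix \<mu> assume "\<mu> \<in> S"
    then have "\<not> \<mu> > 1" using rat_big[OF q, of \<mu> p] unfolding S_def \<rho> by auto
    then show "ereal \<mu> \<le> 1" by simp
  qed
  have ge: "1 \<le> Sup (ereal ` S)"
  proof (rule dense_le)
    fix y :: ereal assume y: "y < 1"
    show "y \<le> Sup (ereal ` S)"
    proof (cases y)
      case (real z)
      then have "z < 1" using y by simp
      then have "z \<in> S" using rat_small[OF q, of z p] unfolding S_def \<rho> by auto
      then show ?thesis unfolding real by (intro Sup_upper) auto
    qed (use y in auto)
  qed
  show ?thesis unfolding irr_exp_Papp S_def[symmetric] using le ge by simp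
qed

lemma irrat_two:
  assumes irr: "\<rho> \<notin> \<rat>"
  shows "infinite (Papp \<rho> 2)"
proof
  assume fin: "finite (Papp \<rho> 2)"
  define \<epsilon> where "\<epsilon> = Min (insert 1 ((\<lambda>(m,n). \<bar>\<rho> - real_of_int m / real_of_int n\<bar>) ` Papp \<rho> 2))"
  have \<epsilon>0: "\<epsilon> > 0" unfolding \<epsilon>_def using fin by (auto simp: Papp_def)
  have \<epsilon>le: "\<epsilon> \<le> \<bar>\<rho> - real_of_int m / real_of_int n\<bar>" if "(m, n) \<in> Papp \<rho> 2" for m n
    unfolding \<epsilon>_def using fin that by (intro Min_le) auto
  obtain N :: nat where N: "real N > 1 / \<epsilon>" using reals_Archimedean2 by blast
  have N0: "N > 0" using N \<epsilon>0 by (cases N) auto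
  obtain h k :: int where k: "0 < k" "k \<le> int N" and hk: "\<bar>of_int k * \<rho> - of_int h\<bar> < 1 / real N"
    by (rule Dirichlet_approx[OF N0, of \<rho>])
  have kr: "real_of_int k \<ge> 1" using k by linarith
  have kN: "real_of_int k \<le> real N" using k by linarith
  have eq: "\<bar>\<rho> - real_of_int h / real_of_int k\<bar> = \<bar>of_int k * \<rho> - of_int h\<bar> / real_of_int k"
  proof -
    have "\<rho> - real_of_int h / real_of_int k = (of_int k * \<rho> - of_int h) / real_of_int k"
      using kr by (simp add: field_simps)
    then show ?thesis using kr by (simp add: abs_divide)
  qed
  have lt1: "\<bar>\<rho> - real_of_int h / real_of_int k\<bar> < 1 / (real N * real_of_int k)"
    unfolding eq using hk kr by (simp add: divide_strict_right_mono field_simps)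
  have "1 / (real N * real_of_int k) \<le> 1 / (real_of_int k * real_of_int k)"
    using kr kN by (intro divide_left_mono mult_right_mono) auto
  also have "\<dots> = \<bar>real_of_int k\<bar> powr (-2)" using kr by (simp add: powr_minus powr_realpow power2_eq_square field_simps)
  finally have lt2: "\<bar>\<rho> - real_of_int h / real_of_int k\<bar> < \<bar>real_of_int k\<bar> powr (-2)" using lt1 by linarith
  have pos: "0 < \<bar>\<rho> - real_of_int h / real_of_int k\<bar>"
  proof -
    have "\<rho> \<noteq> real_of_int h / real_of_int k"
    proof
      assume "\<rho> = real_of_int h / real_of_int k"
      then have "\<rho> \<in> \<rat>" by simp
      then show False using irr by simp
    qed
    then show ?thesis by simp
  qed
  have mem: "(h, k) \<in> Papp \<rho> 2" using k pos lt2 by (simp add: Papp_def)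
  have "1 / (real N * real_of_int k) \<le> 1 / real N" using kr N0 by (simp add: field_simps)
  also have "1 / real N < \<epsilon>" using N \<epsilon>0 N0 by (simp add: field_simps)
  finally show False using \<epsilon>le[OF mem] lt1 by linarith
qed

lemma irrat_inf:
  assumes irr: "\<rho> \<notin> \<rat>" and \<mu>: "\<mu> \<le> 2 \<or> ereal \<mu> < irr_exp \<rho>"
  shows "infinite (Papp \<rho> \<mu>)"
  using \<mu>
proof
  assume "\<mu> \<le> 2"
  then have "Papp \<rho> 2 \<subseteq> Papp \<rho> \<mu>" by (rule Papp_mono)
  then show ?thesis using irrat_two[OF irr] finite_subset by blast
next
  assume "ereal \<mu> < irr_exp \<rho>"
  then obtain x where x: "x \<in> ereal ` {\<mu>. infinite (Papp \<rho> \<mu>)}" "ereal \<mu> < x"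
    unfolding irr_exp_Papp less_Sup_iff by blast
  then obtain y where y: "infinite (Papp \<rho> y)" "\<mu> < y" by auto
  have "Papp \<rho> y \<subseteq> Papp \<rho> \<mu>" using y by (intro Papp_mono) auto
  then show ?thesis using y finite_subset by blast
qed

lemma case_c:
  fixes \<alpha>1 \<alpha>2 r s b :: real
  assumes a1: "\<alpha>1 \<noteq> 0" and r: "r = \<alpha>2 / \<alpha>1" and r4: "r \<ge> 1/4" and r1: "r \<noteq> 1" and s: "s < s_r r"
  shows "\<not> bilinear_est \<alpha>1 \<alpha>2 s b True"
proof -
  define \<rho> where "\<rho> = sqrt (12 * r - 3)"
  have r43: "12 * r - 3 \<ge> 0" using r4 by linarith
  then have \<rho>0: "\<rho> \<ge> 0" unfolding \<rho>_def by simp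
  from r43 have \<rho>2: "\<rho>^2 = 12 * r - 3" unfolding \<rho>_def by simp
  have a2: "\<alpha>2 = (\<rho>^2+3)/12 * \<alpha>1" using \<rho>2 r a1 by (simp add: field_simps)
  have \<rho>3: "\<rho> \<noteq> 3"
  proof
    assume "\<rho> = 3"
    then have "12 * r - 3 = 9" using \<rho>2 by simp
    then show False using r1 by simp
  qed
  have sig: "sigma_r r = irr_exp \<rho>" unfolding sigma_r_def \<rho>_def ..
  show ?thesis
  proof (cases "\<rho> \<in> \<rat>")
    case True
    have "s_r r = 1" unfolding s_r_def sig irr_exp_rat[OF True] by simp
    with s have s1: "s < (3-1)/2" by simp
    obtain p q :: int where q: "q > 0" and \<rho>q: "\<rho> = real_of_int p / real_of_int q"
      using Rats_cases'[OF True] by metis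
    have approx: "\<exists>m n::int. real_of_int n > B \<and> \<bar>\<rho> - real_of_int m / real_of_int n\<bar> \<le> real_of_int n powr (-3)" for B
    proof -
      define t :: int where "t = \<lceil>\<bar>B\<bar>\<rceil> + 1"
      have t: "real_of_int t > \<bar>B\<bar>" "t > 0" unfolding t_def by linarith+
      have "real_of_int (q * t) \<ge> real_of_int t" using q t by (simp add: mult_le_cancel_right1)
      then have gt: "real_of_int (q * t) > B" using t by linarith
      have "real_of_int (p * t) / real_of_int (q * t) = \<rho>" using t q unfolding \<rho>q by simp
      then show ?thesis using gt by (intro exI[of _ "p*t"] exI[of _ "q*t"]) simp
    qed
    show ?thesis unfolding a2 by (rule case_c_gen[OF \<rho>0 \<rho>3 _ _ s1 approx]) auto
  next
    case False
    have ge2: "ereal 2 \<le> irr_exp \<rho>" unfolding irr_exp_Papp using irrat_two[OF False] by (intro Sup_upper) auto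
    obtain \<mu> where \<mu>: "1 \<le> \<mu>" "\<mu> \<le> 3" "s < (\<mu>-1)/2" "infinite (Papp \<rho> \<mu>)"
    proof (cases "irr_exp \<rho> \<ge> 3")
      case True
      then have "s_r r = 1" unfolding s_r_def sig by simp
      with s have s1: "s < 1" by simp
      define \<mu> where "\<mu> = max 2 (s+2)"
      have "\<mu> \<le> 2 \<or> ereal \<mu> < irr_exp \<rho>"
      proof -
        have "\<mu> < 3" using s1 by (simp add: \<mu>_def)
        then have "ereal \<mu> < 3" by simp
        then show ?thesis using True by (meson less_le_trans)
      qed
      then have "infinite (Papp \<rho> \<mu>)" by (rule irrat_inf[OF False])
      moreover have "1 \<le> \<mu>" "\<mu> \<le> 3" "s < (\<mu>-1)/2" using s1 by (auto simp: \<mu>_def)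
      ultimately show ?thesis using that by blast
    next
      case False2: False
      then have lt3: "irr_exp \<rho> < 3" by simp
      obtain \<sigma> where \<sigma>: "irr_exp \<rho> = ereal \<sigma>" using ge2 lt3 by (cases "irr_exp \<rho>") auto
      have \<sigma>2: "2 \<le> \<sigma>" "\<sigma> < 3" using ge2 lt3 \<sigma> by auto
      have "s_r r = (\<sigma> - 1)/2" unfolding s_r_def sig \<sigma> using \<sigma>2 by simp
      with s have s1: "2 * s + 1 < \<sigma>" by simp
      define \<mu> where "\<mu> = max 2 ((2 * s + 1+\<sigma>)/2)"
      have "\<mu> \<le> 2 \<or> ereal \<mu> < irr_exp \<rho>" using s1 unfolding \<sigma> \<mu>_def by auto
      then have "infinite (Papp \<rho> \<mu>)" by (rule irrat_inf[OF False])
      moreover have "1 \<le> \<mu>" "\<mu> \<le> 3" using s1 \<sigma>2 by (auto simp: \<mu>_def max_def)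
      moreover have "s < (\<mu>-1)/2"
      proof (cases "2 \<le> (2 * s + 1 + \<sigma>)/2")
        case True
        then have "\<mu> = (2 * s + 1 + \<sigma>)/2" by (simp add: \<mu>_def)
        then show ?thesis using s1 by (simp add: field_simps)
      next
        case False
        then have "\<mu> = 2" by (simp add: \<mu>_def)
        then show ?thesis using s1 False by (simp add: field_simps)
      qed
      ultimately show ?thesis using that by blast
    qed
    have approx: "\<exists>m n::int. real_of_int n > B \<and> \<bar>\<rho> - real_of_int m / real_of_int n\<bar> \<le> real_of_int n powr (-\<mu>)" for B
      using approx_of_infinite[OF \<mu>(4)] \<mu>(1) by simp
    show ?thesis unfolding a2 by (rule case_c_gen[OF \<rho>0 \<rho>3 \<mu>(1,2,3) approx])
  qed
qed

theorem proposition4p3: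
  fixes \<alpha>1 \<alpha>2 s b r :: real
  assumes "\<alpha>1 \<noteq> 0" and "\<alpha>2 \<noteq> 0"
    and "r = \<alpha>2 / \<alpha>1"
  shows "(r < 1/4 \<and> s < -1/4 \<longrightarrow> \<not> bilinear_est \<alpha>1 \<alpha>2 s b True)
       \<and> (r = 1 \<and> s < 1/2 \<longrightarrow> \<not> bilinear_est \<alpha>1 \<alpha>2 s b True)
       \<and> (r \<ge> 1/4 \<and> r \<noteq> 1 \<and> s < s_r r \<longrightarrow> \<not> bilinear_est \<alpha>1 \<alpha>2 s b True)
       \<and> \<not> bilinear_est \<alpha>1 \<alpha>2 s b False"
proof (intro conjI impI)
  assume "r < 1/4 \<and> s < -1/4"
  then show "\<not> bilinear_est \<alpha>1 \<alpha>2 s b True" by (intro case_a) auto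
next
  assume h: "r = 1 \<and> s < 1/2"
  then have "\<alpha>2 = \<alpha>1" using assms by (simp add: field_simps)
  then show "\<not> bilinear_est \<alpha>1 \<alpha>2 s b True" using case_b[of s \<alpha>1 b] h by simp
next
  assume "1/4 \<le> r \<and> r \<noteq> 1 \<and> s < s_r r"
  then show "\<not> bilinear_est \<alpha>1 \<alpha>2 s b True" using case_c[OF assms(1,3)] by auto
next
  show "\<not> bilinear_est \<alpha>1 \<alpha>2 s b False" by (rule case_d)
qed

end
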